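(* Let $G$ be a finite group and $X$ a finite $G$-poset. For all $n\ge 1$ there is an isomorphism of posets $X^{(n)}/G\cong(X'/G)^{(n-1)}$. If $X$ satisfies property (B), then $X^{(n)}/G\cong(X/G)^{(n)}$ for all $n\ge 0$.
   Context: A finite $G$-poset is a finite poset with a right action of $G$ by order-preserving maps. For a poset $Y$, $Y'$ is the poset of non-empty chains of $Y$ ordered by inclusion (with the induced componentwise $G$-action), and $Y^{(n)}$ is the $n$-th iterated subdivision ($Y^{(0)}=Y$, $Y^{(n)}=(Y^{(n-1)})'$). For a $G$-poset $Y$, $Y/G$ is the orbit poset: $\overline{y}\le\overline{z}$ iff some representatives satisfy $y_1\le z_1$. $X$ satisfies property (B) if whenever $\{v_0,\dots,v_n\}$ and $\{v_0^{g_0},\dots,v_n^{g_n}\}$ are both chains of $X$ with $g_i\in G$, there is $g\in G$ with $v_i^{g_i}=v_i^g$ for all $i$. *)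

theory Defs
  imports "HOL-Algebra.Group" "HOL-Library.FSet"
begin

type_synonym 'a poset = "'a set \<times> ('a \<Rightarrow> 'a \<Rightarrow> bool)"

definition is_poset :: "'a set \<Rightarrow> ('a \<Rightarrow> 'a \<Rightarrow> bool) \<Rightarrow> bool" where
  "is_poset C r \<longleftrightarrow> (\<forall>x\<in>C. r x x) \<and>
     (\<forall>x\<in>C. \<forall>y\<in>C. r x y \<and> r y x \<longrightarrow> x = y) \<and>
     (\<forall>x\<in>C. \<forall>y\<in>C. \<forall>z\<in>C. r x y \<and> r y z \<longrightarrow> r x z)"

definition is_chain :: "'a set \<Rightarrow> ('a \<Rightarrow> 'a \<Rightarrow> bool) \<Rightarrow> 'a set \<Rightarrow> bool" where
  "is_chain C r S \<longleftrightarrow> S \<subseteq> C \<and> (\<forall>x\<in>S. \<forall>y\<in>S. r x y \<or> r y x)"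

text \<open>Hereditarily finite sets over atoms: a uniform type hosting all iterated subdivisions.\<close>
datatype 'a hf = Atom 'a | HSet "'a hf fset"

definition atoms :: "'a poset \<Rightarrow> 'a hf poset" where
  "atoms P = (Atom ` fst P, \<lambda>u v. \<exists>x y. u = Atom x \<and> v = Atom y \<and> snd P x y)"

definition subdiv :: "'a hf poset \<Rightarrow> 'a hf poset" where
  "subdiv P = ({HSet s | s. s \<noteq> {||} \<and> is_chain (fst P) (snd P) (fset s)},
               \<lambda>u v. \<exists>s t. u = HSet s \<and> v = HSet t \<and> s |\<subseteq>| t)"

definition subdiv_n :: "nat \<Rightarrow> 'a hf poset \<Rightarrow> 'a hf poset" where
  "subdiv_n n P = (subdiv ^^ n) P"

definition hf_act :: "('a \<Rightarrow> 'g \<Rightarrow> 'a) \<Rightarrow> 'a hf \<Rightarrow> 'g \<Rightarrow> 'a hf" where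
  "hf_act act y g = map_hf (\<lambda>x. act x g) y"

definition orbit_poset :: "('g, 'm) monoid_scheme \<Rightarrow> ('b \<Rightarrow> 'g \<Rightarrow> 'b) \<Rightarrow> 'b poset \<Rightarrow> 'b set poset" where
  "orbit_poset G act P = ((\<lambda>y. (\<lambda>g. act y g) ` carrier G) ` fst P,
      \<lambda>O1 O2. \<exists>y\<in>O1. \<exists>z\<in>O2. snd P y z)"

definition poset_iso :: "'a poset \<Rightarrow> 'b poset \<Rightarrow> bool" where
  "poset_iso P Q \<longleftrightarrow> (\<exists>f. bij_betw f (fst P) (fst Q) \<and>
      (\<forall>x\<in>fst P. \<forall>y\<in>fst P. snd P x y \<longleftrightarrow> snd Q (f x) (f y)))"

definition G_poset :: "('g, 'm) monoid_scheme \<Rightarrow> ('a \<Rightarrow> 'g \<Rightarrow> 'a) \<Rightarrow> 'a set \<Rightarrow> ('a \<Rightarrow> 'a \<Rightarrow> bool) \<Rightarrow> bool" where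
  "G_poset G act X r \<longleftrightarrow> is_poset X r \<and>
     (\<forall>x\<in>X. \<forall>g\<in>carrier G. act x g \<in> X) \<and>
     (\<forall>x\<in>X. act x \<one>\<^bsub>G\<^esub> = x) \<and>
     (\<forall>x\<in>X. \<forall>g\<in>carrier G. \<forall>h\<in>carrier G. act (act x g) h = act x (g \<otimes>\<^bsub>G\<^esub> h)) \<and>
     (\<forall>x\<in>X. \<forall>y\<in>X. \<forall>g\<in>carrier G. r x y \<longrightarrow> r (act x g) (act y g))"

definition property_B :: "('g, 'm) monoid_scheme \<Rightarrow> ('a \<Rightarrow> 'g \<Rightarrow> 'a) \<Rightarrow> 'a set \<Rightarrow> ('a \<Rightarrow> 'a \<Rightarrow> bool) \<Rightarrow> bool" where
  "property_B G act X r \<longleftrightarrow>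
     (\<forall>(n::nat) (v::nat \<Rightarrow> 'a) (gs::nat \<Rightarrow> 'g).
        inj_on v {..n} \<and> (\<forall>i\<in>{..n}. gs i \<in> carrier G) \<and>
        is_chain X r (v ` {..n}) \<and> is_chain X r ((\<lambda>i. act (v i) (gs i)) ` {..n})
        \<longrightarrow> (\<exists>g\<in>carrier G. \<forall>i\<in>{..n}. act (v i) (gs i) = act (v i) g))"

end

theory Submission
  imports Defs "HOL-Algebra.Multiplicative_Group"
begin

lemma fset_ex: "finite A \<Longrightarrow> \<exists>s. fset s = A"
  by (metis fset_to_fset)

lemma iso_refl_atoms: "poset_iso P (atoms P)"
  unfolding poset_iso_def atoms_def
  by (rule exI[of _ Atom]) (auto simp: bij_betw_def inj_on_def)

lemma iso_sym: assumes "poset_iso P Q" shows "poset_iso Q P"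
proof -
  obtain f where f: "bij_betw f (fst P) (fst Q)"
    "\<forall>x\<in>fst P. \<forall>y\<in>fst P. snd P x y \<longleftrightarrow> snd Q (f x) (f y)"
    using assms unfolding poset_iso_def by blast
  let ?g = "inv_into (fst P) f"
  have g: "bij_betw ?g (fst Q) (fst P)" using f(1) by (rule bij_betw_inv_into)
  have "\<forall>x\<in>fst Q. \<forall>y\<in>fst Q. snd Q x y \<longleftrightarrow> snd P (?g x) (?g y)"
  proof (intro ballI)
    fix x y assume "x \<in> fst Q" "y \<in> fst Q"
    then have "?g x \<in> fst P" "?g y \<in> fst P" "f (?g x) = x" "f (?g y) = y"
      using g f(1) by (auto simp: bij_betw_def f_inv_into_f)
    then show "snd Q x y \<longleftrightarrow> snd P (?g x) (?g y)" using f(2) by metis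
  qed
  then show ?thesis using g unfolding poset_iso_def by blast
qed

lemma iso_trans: assumes "poset_iso P Q" "poset_iso Q R" shows "poset_iso P R"
proof -
  obtain f where f: "bij_betw f (fst P) (fst Q)"
    "\<forall>x\<in>fst P. \<forall>y\<in>fst P. snd P x y \<longleftrightarrow> snd Q (f x) (f y)"
    using assms(1) unfolding poset_iso_def by blast
  obtain g where g: "bij_betw g (fst Q) (fst R)"
    "\<forall>x\<in>fst Q. \<forall>y\<in>fst Q. snd Q x y \<longleftrightarrow> snd R (g x) (g y)"
    using assms(2) unfolding poset_iso_def by blast
  have "bij_betw (g \<circ> f) (fst P) (fst R)" using f(1) g(1) by (rule bij_betw_trans)
  moreover have "\<forall>x\<in>fst P. \<forall>y\<in>fst P. snd P x y \<longleftrightarrow> snd R ((g \<circ> f) x) ((g \<circ> f) y)"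
    using f g bij_betwE[OF f(1)] by simp
  ultimately show ?thesis unfolding poset_iso_def by blast
qed

lemma iso_atoms: "poset_iso P Q \<Longrightarrow> poset_iso (atoms P) (atoms Q)"
  by (meson iso_refl_atoms iso_sym iso_trans)

definition hmap :: "('a hf \<Rightarrow> 'b hf) \<Rightarrow> 'a hf \<Rightarrow> 'b hf" where
  "hmap f u = (case u of HSet s \<Rightarrow> HSet (f |`| s) | Atom _ \<Rightarrow> undefined)"

lemma iso_subdiv: assumes "poset_iso P Q" shows "poset_iso (subdiv P) (subdiv Q)"
proof -
  obtain f where f: "bij_betw f (fst P) (fst Q)"
    "\<forall>x\<in>fst P. \<forall>y\<in>fst P. snd P x y \<longleftrightarrow> snd Q (f x) (f y)"
    using assms(1) unfolding poset_iso_def by blast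
  have inj: "inj_on f (fst P)" and im: "f ` fst P = fst Q" using f(1) by (auto simp: bij_betw_def)
  have ch: "is_chain (fst Q) (snd Q) (f ` A) \<longleftrightarrow> is_chain (fst P) (snd P) A" if "A \<subseteq> fst P" for A
    using that f(2) im unfolding is_chain_def by (auto, blast+)
  have "bij_betw (hmap f) (fst (subdiv P)) (fst (subdiv Q))"
    unfolding bij_betw_def
  proof
    show "inj_on (hmap f) (fst (subdiv P))"
    proof (rule inj_onI)
      fix x y assume "x \<in> fst (subdiv P)" "y \<in> fst (subdiv P)" "hmap f x = hmap f y"
      then obtain s t where st: "x = HSet s" "y = HSet t" "fset s \<subseteq> fst P" "fset t \<subseteq> fst P"
        "f ` fset s = f ` fset t"
        by (auto simp: subdiv_def is_chain_def hmap_def fimage.rep_eq) (metis fimage.rep_eq)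
      then have "fset s = fset t" using inj_on_image_eq_iff[OF inj] by blast
      then show "x = y" using st by (simp add: fset_inject)
    qed
    show "hmap f ` fst (subdiv P) = fst (subdiv Q)"
    proof
      show "hmap f ` fst (subdiv P) \<subseteq> fst (subdiv Q)"
        using ch by (auto simp: subdiv_def hmap_def fimage.rep_eq is_chain_def)
    next
      show "fst (subdiv Q) \<subseteq> hmap f ` fst (subdiv P)"
      proof
        fix u assume "u \<in> fst (subdiv Q)"
        then obtain t where t: "u = HSet t" "t \<noteq> {||}" "is_chain (fst Q) (snd Q) (fset t)"
          by (auto simp: subdiv_def)
        let ?s = "inv_into (fst P) f |`| t"
        have sub: "fset ?s \<subseteq> fst P" using t(3) im
          by (auto simp: fimage.rep_eq is_chain_def intro!: inv_into_into)
        have fs: "f |`| ?s = t"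
        proof -
          have "\<forall>x\<in>fset t. f (inv_into (fst P) f x) = x" using t(3) im
            by (auto simp: is_chain_def intro!: f_inv_into_f)
          then have "f ` fset ?s = fset t"
            by (simp add: fimage.rep_eq image_image)
          then show ?thesis by (metis fset_inject fimage.rep_eq)
        qed
        have "is_chain (fst P) (snd P) (fset ?s)"
          using ch[OF sub] fs t(3) by (metis fimage.rep_eq)
        moreover have "?s \<noteq> {||}" using t(2) by auto
        ultimately have "HSet ?s \<in> fst (subdiv P)" by (auto simp: subdiv_def)
        moreover have "hmap f (HSet ?s) = u" using fs t by (simp add: hmap_def)
        ultimately show "u \<in> hmap f ` fst (subdiv P)" by blast
      qed
    qed
  qed
  moreover have "\<forall>x\<in>fst (subdiv P). \<forall>y\<in>fst (subdiv P).
      snd (subdiv P) x y \<longleftrightarrow> snd (subdiv Q) (hmap f x) (hmap f y)"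
  proof (intro ballI)
    fix x y assume "x \<in> fst (subdiv P)" "y \<in> fst (subdiv P)"
    then obtain s t where st: "x = HSet s" "y = HSet t" "fset s \<subseteq> fst P" "fset t \<subseteq> fst P"
      by (auto simp: subdiv_def is_chain_def)
    have "fset s \<subseteq> fset t \<longleftrightarrow> f ` fset s \<subseteq> f ` fset t"
      using st inj by (metis inj_on_image_mem_iff subset_image_iff image_mono inj_on_subset subsetI
          inj_on_image_eq_iff sup.absorb_iff2 image_Un le_sup_iff)
    then show "snd (subdiv P) x y \<longleftrightarrow> snd (subdiv Q) (hmap f x) (hmap f y)"
      using st by (simp add: subdiv_def hmap_def less_eq_fset.rep_eq fimage.rep_eq)
  qed
  ultimately show ?thesis unfolding poset_iso_def by blast
qed

lemma subdiv_n_Suc: "subdiv_n (Suc n) P = subdiv (subdiv_n n P)"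
  by (simp add: subdiv_n_def)

lemma subdiv_n_Suc': "subdiv_n (Suc n) P = subdiv_n n (subdiv P)"
  by (simp add: subdiv_n_def funpow_Suc_right del: funpow.simps)

lemma iso_subdiv_n: "poset_iso P Q \<Longrightarrow> poset_iso (subdiv_n n P) (subdiv_n n Q)"
  by (induction n) (auto simp: subdiv_n_Suc iso_subdiv, simp add: subdiv_n_def)

locale gpos = group G for G :: "('g, 'm) monoid_scheme" (structure) +
  fixes act :: "'b \<Rightarrow> 'g \<Rightarrow> 'b" and C :: "'b set" and le :: "'b \<Rightarrow> 'b \<Rightarrow> bool"
  assumes gp: "G_poset G act C le" and fin: "finite (carrier G)"
begin

lemma closed: "x \<in> C \<Longrightarrow> g \<in> carrier G \<Longrightarrow> act x g \<in> C"
  and act_one: "x \<in> C \<Longrightarrow> act x \<one> = x"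
  and act_mult: "x \<in> C \<Longrightarrow> g \<in> carrier G \<Longrightarrow> h \<in> carrier G \<Longrightarrow> act (act x g) h = act x (g \<otimes> h)"
  and mono: "x \<in> C \<Longrightarrow> y \<in> C \<Longrightarrow> g \<in> carrier G \<Longrightarrow> le x y \<Longrightarrow> le (act x g) (act y g)"
  and refl: "x \<in> C \<Longrightarrow> le x x"
  and antisym: "x \<in> C \<Longrightarrow> y \<in> C \<Longrightarrow> le x y \<Longrightarrow> le y x \<Longrightarrow> x = y"
  and trans: "x \<in> C \<Longrightarrow> y \<in> C \<Longrightarrow> z \<in> C \<Longrightarrow> le x y \<Longrightarrow> le y z \<Longrightarrow> le x z"
  using gp unfolding G_poset_def is_poset_def by blast+

lemma act_inv: "x \<in> C \<Longrightarrow> g \<in> carrier G \<Longrightarrow> act (act x g) (inv g) = x"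
  by (simp add: act_mult act_one)

lemma act_inv2: "x \<in> C \<Longrightarrow> g \<in> carrier G \<Longrightarrow> act (act x (inv g)) g = x"
  by (simp add: act_mult act_one)

definition orb :: "'b \<Rightarrow> 'b set" where "orb x = (\<lambda>g. act x g) ` carrier G"

lemma orb_self: "x \<in> C \<Longrightarrow> x \<in> orb x"
  unfolding orb_def by (metis act_one image_eqI one_closed)

lemma orb_act: "x \<in> C \<Longrightarrow> g \<in> carrier G \<Longrightarrow> orb (act x g) = orb x"
proof -
  assume x: "x \<in> C" and g: "g \<in> carrier G"
  show ?thesis unfolding orb_def
  proof
    show "(\<lambda>h. act (act x g) h) ` carrier G \<subseteq> (\<lambda>h. act x h) ` carrier G"
      using x g by (auto simp: act_mult)
    show "(\<lambda>h. act x h) ` carrier G \<subseteq> (\<lambda>h. act (act x g) h) ` carrier G"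
    proof
      fix y assume "y \<in> (\<lambda>h. act x h) ` carrier G"
      then obtain h where h: "h \<in> carrier G" "y = act x h" by blast
      have "act (act x g) (inv g \<otimes> h) = y" using x g h by (simp add: act_mult m_assoc[symmetric])
      then show "y \<in> (\<lambda>h. act (act x g) h) ` carrier G" using g h by blast
    qed
  qed
qed

lemma orb_eq_iff: assumes "x \<in> C" "y \<in> C" shows "orb x = orb y \<longleftrightarrow> (\<exists>g\<in>carrier G. y = act x g)"
proof
  assume "orb x = orb y"
  then have "y \<in> orb x" using orb_self[OF assms(2)] by simp
  then show "\<exists>g\<in>carrier G. y = act x g" unfolding orb_def by blast
next
  assume "\<exists>g\<in>carrier G. y = act x g"
  then show "orb x = orb y" using orb_act[OF assms(1)] by auto
qed

lemma orb_sub: "x \<in> C \<Longrightarrow> orb x \<subseteq> C"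
  unfolding orb_def using closed by blast

lemma pow_le: assumes x: "x \<in> C" and h: "h \<in> carrier G" and l: "le x (act x h)"
  shows "le x (act x (h [^] (j::nat)))"
proof (induction j)
  case 0 then show ?case using x by (simp add: act_one refl)
next
  case (Suc j)
  have "le (act x h) (act (act x (h [^] j)) h)"
    using mono[OF x closed[OF x] h Suc.IH] h x by simp
  then have "le (act x h) (act x (h [^] Suc j))" using x h by (simp add: act_mult)
  then show ?case using trans[OF x closed[OF x h] closed[OF x], of "h [^] Suc j"] l h by simp
qed

lemma fixed_up: assumes x: "x \<in> C" and h: "h \<in> carrier G" and l: "le x (act x h)"
  shows "act x h = x"
proof -
  have o: "ord h \<ge> 1" using ord_ge_1[OF fin h] .
  have "le x (act x (h [^] (ord h - 1)))" by (rule pow_le[OF x h l])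
  then have "le (act x h) (act (act x (h [^] (ord h - 1))) h)"
    using mono[OF x closed[OF x] h] h by simp
  also have "act (act x (h [^] (ord h - 1))) h = act x (h [^] (ord h - 1) \<otimes> h)"
    using x h by (simp add: act_mult)
  also have "h [^] (ord h - 1) \<otimes> h = h [^] ord h"
  proof -
    have "Suc (ord h - 1) = ord h" using o by simp
    then show ?thesis using nat_pow_Suc[of h "ord h - 1"] by simp
  qed
  finally have "le (act x h) x" using x h by (simp add: act_one)
  then show ?thesis using antisym[OF closed[OF x h] x] l by blast
qed

lemma fixed: assumes x: "x \<in> C" and h: "h \<in> carrier G" and l: "le x (act x h) \<or> le (act x h) x"
  shows "act x h = x"
  using l
proof
  assume "le x (act x h)" then show ?thesis using fixed_up x h by blast
next
  assume "le (act x h) x"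
  then have "le x (act x (inv h))" using mono[OF closed[OF x h] x, of "inv h"] x h by (simp add: act_inv)
  then have "act x (inv h) = x" using fixed_up x h by simp
  then show ?thesis using act_inv2[OF x h] by simp
qed

lemma same_orb_comp: assumes "x \<in> C" "y \<in> C" "orb x = orb y" "le x y \<or> le y x"
  shows "x = y"
proof -
  obtain g where g: "g \<in> carrier G" "y = act x g" using assms orb_eq_iff by blast
  show ?thesis using fixed[OF assms(1) g(1)] assms(4) g(2) by simp
qed

definition ole :: "'b set \<Rightarrow> 'b set \<Rightarrow> bool" where
  "ole O1 O2 \<longleftrightarrow> (\<exists>y\<in>O1. \<exists>z\<in>O2. le y z)"

lemma ole_orb: "x \<in> C \<Longrightarrow> y \<in> C \<Longrightarrow> ole (orb x) (orb y) \<longleftrightarrow> (\<exists>g\<in>carrier G. le x (act y g))"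
proof
  assume x: "x \<in> C" and y: "y \<in> C" and "ole (orb x) (orb y)"
  then obtain a b where ab: "a \<in> carrier G" "b \<in> carrier G" "le (act x a) (act y b)"
    unfolding ole_def orb_def by blast
  have "le (act (act x a) (inv a)) (act (act y b) (inv a))"
    by (rule mono[OF closed[OF x ab(1)] closed[OF y ab(2)] inv_closed[OF ab(1)] ab(3)])
  then show "\<exists>g\<in>carrier G. le x (act y g)" using x y ab by (auto simp: act_inv act_mult act_one)
next
  assume x: "x \<in> C" and y: "y \<in> C" and "\<exists>g\<in>carrier G. le x (act y g)"
  then show "ole (orb x) (orb y)" unfolding ole_def orb_def by (metis act_one image_eqI one_closed)
qed

lemma ole_trans: assumes "x \<in> C" "y \<in> C" "z \<in> C" "ole (orb x) (orb y)" "ole (orb y) (orb z)"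
  shows "ole (orb x) (orb z)"
proof -
  obtain g where g: "g \<in> carrier G" "le x (act y g)" using assms ole_orb by blast
  obtain h where h: "h \<in> carrier G" "le y (act z h)" using assms ole_orb by blast
  have m: "le (act y g) (act (act z h) g)" by (rule mono[OF assms(2) closed[OF assms(3) h(1)] g(1) h(2)])
  have "le x (act (act z h) g)"
    by (rule trans[OF assms(1) closed[OF assms(2) g(1)] closed[OF closed[OF assms(3) h(1)] g(1)] g(2) m])
  then have "le x (act z (h \<otimes> g))" using act_mult[OF assms(3) h(1) g(1)] by simp
  then show ?thesis using ole_orb assms g h by blast
qed

end

lemma subdiv_mem: "HSet s \<in> fst (subdiv P) \<longleftrightarrow>
   s \<noteq> {||} \<and> fset s \<subseteq> fst P \<and> (\<forall>x\<in>fset s. \<forall>y\<in>fset s. snd P x y \<or> snd P y x)"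
  by (auto simp: subdiv_def is_chain_def)

lemma subdiv_memE: "u \<in> fst (subdiv P) \<Longrightarrow> \<exists>s. u = HSet s"
  by (auto simp: subdiv_def)

lemma subdiv_rel: "snd (subdiv P) (HSet s) (HSet t) \<longleftrightarrow> fset s \<subseteq> fset t"
  by (simp add: subdiv_def less_eq_fset.rep_eq)

lemma hf_act_HSet: "hf_act act (HSet s) g = HSet ((\<lambda>y. hf_act act y g) |`| s)"
  by (simp add: hf_act_def)

lemma hf_act_Atom: "hf_act act (Atom x) g = Atom (act x g)"
  by (simp add: hf_act_def)

lemma HSet_eq: "HSet s = HSet t \<longleftrightarrow> fset s = fset t"
  by (simp add: fset_inject)

locale hpos = gpos G "hf_act act" Y le
  for G :: "('g, 'm) monoid_scheme" (structure) and act :: "'a \<Rightarrow> 'g \<Rightarrow> 'a"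
  and Y :: "'a hf set" and le
begin

abbreviation "SC \<equiv> fst (subdiv (Y, le))"
abbreviation "sle \<equiv> snd (subdiv (Y, le))"

lemma SC_mem: "HSet s \<in> SC \<longleftrightarrow>
   s \<noteq> {||} \<and> fset s \<subseteq> Y \<and> (\<forall>x\<in>fset s. \<forall>y\<in>fset s. le x y \<or> le y x)"
  using subdiv_mem[of s "(Y, le)"] by simp

lemma act_S: "fset (case hf_act act (HSet s) g of HSet t \<Rightarrow> t) = (\<lambda>y. hf_act act y g) ` fset s"
  by (simp add: hf_act_HSet fimage.rep_eq)

lemma G_poset_sub: "G_poset G (hf_act act) SC sle"
  unfolding G_poset_def is_poset_def
proof (intro conjI ballI impI)
  fix u assume "u \<in> SC"
  then obtain s where "u = HSet s" using subdiv_memE by blast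
  then show "sle u u" by (simp add: subdiv_rel)
next
  fix u v assume "u \<in> SC" "v \<in> SC" "sle u v \<and> sle v u"
  then obtain s t where "u = HSet s" "v = HSet t" "fset s \<subseteq> fset t" "fset t \<subseteq> fset s"
    using subdiv_memE subdiv_rel by metis
  then show "u = v" by (metis fset_inject subset_antisym)
next
  fix u v w assume "u \<in> SC" "v \<in> SC" "w \<in> SC" "sle u v \<and> sle v w"
  then obtain s t r where "u = HSet s" "v = HSet t" "w = HSet r" "fset s \<subseteq> fset t" "fset t \<subseteq> fset r"
    using subdiv_memE subdiv_rel by metis
  then show "sle u w" by (simp add: subdiv_rel)
next
  fix u g assume u: "u \<in> SC" and g: "g \<in> carrier G"
  then obtain s where s: "u = HSet s" using subdiv_memE by blast
  have "(\<lambda>y. hf_act act y g) |`| s \<noteq> {||}" using u s SC_mem by auto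
  moreover have "fset ((\<lambda>y. hf_act act y g) |`| s) \<subseteq> Y"
    using u s SC_mem closed g by (auto simp: fimage.rep_eq)
  moreover have "\<forall>x\<in>fset ((\<lambda>y. hf_act act y g) |`| s). \<forall>y\<in>fset ((\<lambda>y. hf_act act y g) |`| s).
      le x y \<or> le y x"
  proof (intro ballI)
    fix x y assume "x \<in> fset ((\<lambda>y. hf_act act y g) |`| s)" "y \<in> fset ((\<lambda>y. hf_act act y g) |`| s)"
    then obtain a b where ab: "a \<in> fset s" "b \<in> fset s" "x = hf_act act a g" "y = hf_act act b g"
      by (auto simp: fimage.rep_eq)
    have "a \<in> Y" "b \<in> Y" "le a b \<or> le b a" using u s SC_mem ab by auto
    then show "le x y \<or> le y x" using mono[OF _ _ g] ab by blast
  qed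
  ultimately show "hf_act act u g \<in> SC" using s by (simp add: hf_act_HSet SC_mem)
next
  fix u assume u: "u \<in> SC"
  then obtain s where s: "u = HSet s" using subdiv_memE by blast
  have "(\<lambda>y. hf_act act y \<one>) ` fset s = fset s"
  proof -
    have "\<forall>y\<in>fset s. hf_act act y \<one> = y" using u s SC_mem act_one by auto
    then show ?thesis by simp
  qed
  then show "hf_act act u \<one> = u" using s by (simp add: hf_act_HSet fimage.rep_eq flip: fset_inject)
next
  fix u g h assume u: "u \<in> SC" and g: "g \<in> carrier G" and h: "h \<in> carrier G"
  then obtain s where s: "u = HSet s" using subdiv_memE by blast
  have "(\<lambda>x. hf_act act (hf_act act x g) h) ` fset s = (\<lambda>y. hf_act act y (g \<otimes> h)) ` fset s" using u s SC_mem act_mult g h by (intro image_cong) auto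
  then show "hf_act act (hf_act act u g) h = hf_act act u (g \<otimes> h)"
    using s by (simp add: hf_act_HSet fimage.rep_eq flip: fset_inject)
next
  fix u v g assume u: "u \<in> SC" and v: "v \<in> SC" and g: "g \<in> carrier G" and "sle u v"
  then obtain s t where "u = HSet s" "v = HSet t" "fset s \<subseteq> fset t"
    using subdiv_memE subdiv_rel by metis
  then show "sle (hf_act act u g) (hf_act act v g)"
    by (auto simp: hf_act_HSet subdiv_rel fimage.rep_eq)
qed


lemma B_sub: "property_B G (hf_act act) SC sle"
  unfolding property_B_def
proof (intro allI impI)
  fix n :: nat and v :: "nat \<Rightarrow> 'a hf" and gs :: "nat \<Rightarrow> 'g"
  assume a: "inj_on v {..n} \<and> (\<forall>i\<in>{..n}. gs i \<in> carrier G) \<and>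
        is_chain SC sle (v ` {..n}) \<and> is_chain SC sle ((\<lambda>i. hf_act act (v i) (gs i)) ` {..n})"
  define s where "s i = (case v i of HSet t \<Rightarrow> t)" for i
  have vs: "v i = HSet (s i)" if "i \<le> n" for i
    using a that subdiv_memE unfolding is_chain_def s_def by fastforce
  have gs: "gs i \<in> carrier G" if "i \<le> n" for i using a that by auto
  have sC: "HSet (s i) \<in> SC" if "i \<le> n" for i using a that vs unfolding is_chain_def by force
  have sY: "fset (s i) \<subseteq> Y" and sch: "\<forall>x\<in>fset (s i). \<forall>y\<in>fset (s i). le x y \<or> le y x"
    if "i \<le> n" for i using sC[OF that] SC_mem by auto
  define im where "im i = (\<lambda>y. hf_act act y (gs i)) ` fset (s i)" for i
  have wi: "hf_act act (v i) (gs i) = HSet ((\<lambda>y. hf_act act y (gs i)) |`| s i)" if "i \<le> n" for i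
    using vs[OF that] by (simp add: hf_act_HSet)
  have comp_w: "im i \<subseteq> im j \<or> im j \<subseteq> im i" if "i \<le> n" "j \<le> n" for i j
  proof -
    have "sle (hf_act act (v i) (gs i)) (hf_act act (v j) (gs j)) \<or>
          sle (hf_act act (v j) (gs j)) (hf_act act (v i) (gs i))"
      using a that unfolding is_chain_def by auto
    then show ?thesis using wi that by (simp add: subdiv_rel im_def fimage.rep_eq)
  qed
  have comp_v: "fset (s i) \<subseteq> fset (s j) \<or> fset (s j) \<subseteq> fset (s i)" if "i \<le> n" "j \<le> n" for i j
  proof -
    have "sle (v i) (v j) \<or> sle (v j) (v i)"
      using a that unfolding is_chain_def by auto
    then show ?thesis using vs that by (simp add: subdiv_rel)
  qed
  have fin_im: "finite (im i)" for i by (simp add: im_def)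
  obtain m where m: "m \<le> n" "\<forall>i\<le>n. card (im i) \<le> card (im m)"
  proof -
    have "Max ((\<lambda>i. card (im i)) ` {..n}) \<in> (\<lambda>i. card (im i)) ` {..n}" by (rule Max_in) auto
    then obtain m where "m \<le> n" "card (im m) = Max ((\<lambda>i. card (im i)) ` {..n})"
      by (metis (no_types, lifting) atMost_iff imageE)
    then show ?thesis using that by (metis Max_ge atMost_iff finite_atMost finite_imageI imageI)
  qed
  have sub_m: "im i \<subseteq> im m" if "i \<le> n" for i
  proof -
    have "card (im i) \<le> card (im m)" using m(2) that by blast
    then show ?thesis using comp_w[OF that m(1)] card_seteq[OF fin_im[of i], of "im m"] by blast
  qed
  have eq: "hf_act act x (gs i) = hf_act act x (gs m)" if i: "i \<le> n" and x: "x \<in> fset (s i)" for i x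
  proof -
    have xY: "x \<in> Y" using sY[OF i] x by auto
    have "hf_act act x (gs i) \<in> im m" using sub_m[OF i] x by (auto simp: im_def)
    then obtain y where y: "y \<in> fset (s m)" "hf_act act x (gs i) = hf_act act y (gs m)"
      by (auto simp: im_def)
    have yY: "y \<in> Y" using sY[OF m(1)] y by auto
    define h where "h = gs i \<otimes> inv (gs m)"
    have h: "h \<in> carrier G" using gs[OF i] gs[OF m(1)] by (simp add: h_def)
    have "hf_act act x h = hf_act act (hf_act act x (gs i)) (inv (gs m))"
      using xY gs[OF i] gs[OF m(1)] by (simp add: act_mult h_def)
    also have "\<dots> = y" using y(2) yY gs[OF m(1)] by (simp add: act_inv)
    finally have xh: "hf_act act x h = y" .
    have "le x y \<or> le y x"
      using comp_v[OF i m(1)] sch[OF i] sch[OF m(1)] x y(1) by blast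
    then have "hf_act act x h = x" using fixed[OF xY h] xh by simp
    then have "y = x" using xh by simp
    then show ?thesis using y(2) by simp
  qed
  show "\<exists>g\<in>carrier G. \<forall>i\<in>{..n}. hf_act act (v i) (gs i) = hf_act act (v i) g"
  proof (intro bexI[of _ "gs m"] ballI)
    fix i assume "i \<in> {..n}"
    then have i: "i \<le> n" by simp
    have "(\<lambda>y. hf_act act y (gs i)) ` fset (s i) = (\<lambda>y. hf_act act y (gs m)) ` fset (s i)"
      using eq[OF i] by (intro image_cong) auto
    then show "hf_act act (v i) (gs i) = hf_act act (v i) (gs m)"
      using vs[OF i] by (simp add: hf_act_HSet fimage.rep_eq flip: fset_inject)
  qed (use gs m in auto)
qed

end

lemma chain_max:
  assumes "finite A" "A \<noteq> {}"
  shows "A \<subseteq> D \<longrightarrow> (\<forall>x\<in>A. \<forall>y\<in>A. R x y \<or> R y x) \<longrightarrow>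
    (\<forall>x\<in>D. \<forall>y\<in>D. \<forall>z\<in>D. R x y \<longrightarrow> R y z \<longrightarrow> R x z) \<longrightarrow> (\<exists>m\<in>A. \<forall>x\<in>A. R x m)"
  using assms
proof (induction A rule: finite_ne_induct)
  case (singleton x) then show ?case by blast
next
  case (insert x F)
  show ?case
  proof (intro impI)
    assume a: "insert x F \<subseteq> D" "\<forall>u\<in>insert x F. \<forall>v\<in>insert x F. R u v \<or> R v u"
      "\<forall>x\<in>D. \<forall>y\<in>D. \<forall>z\<in>D. R x y \<longrightarrow> R y z \<longrightarrow> R x z"
    then obtain m where m: "m \<in> F" "\<forall>y\<in>F. R y m" using insert.IH by (meson insert_subset subset_insertI subsetD)
    show "\<exists>m\<in>insert x F. \<forall>y\<in>insert x F. R y m"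
    proof (cases "R m x")
      case True
      have "R y x" if y: "y \<in> F" for y
      proof -
        have "y \<in> D" "m \<in> D" "x \<in> D" using a(1) y m(1) by auto
        then show ?thesis using a(3) m(2) True y by blast
      qed
      moreover have "R x x" using a(2) by blast
      ultimately show ?thesis by blast
    next
      case False
      then have "R x m" using a(2) m(1) by blast
      then show ?thesis using m by blast
    qed
  qed
qed

context gpos
begin

lemma orbit_poset_eq: "orbit_poset G act (C, le) = (orb ` C, ole)"
  by (simp add: orbit_poset_def orb_def ole_def fun_eq_iff)

lemma orbit_iso:
  assumes im: "\<Phi> ` C = fst Q" and eq: "\<forall>u\<in>C. \<forall>v\<in>C. \<Phi> u = \<Phi> v \<longleftrightarrow> orb u = orb v"
    and ord: "\<forall>u\<in>C. \<forall>v\<in>C. snd Q (\<Phi> u) (\<Phi> v) \<longleftrightarrow> ole (orb u) (orb v)"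
  shows "poset_iso (orbit_poset G act (C, le)) Q"
proof -
  define f where "f Ob = \<Phi> (SOME u. u \<in> C \<and> Ob = orb u)" for Ob
  have fo: "f (orb u) = \<Phi> u" if u: "u \<in> C" for u
  proof -
    have "\<exists>u'. u' \<in> C \<and> orb u = orb u'" using u by blast
    then have "(SOME u'. u' \<in> C \<and> orb u = orb u') \<in> C \<and> orb u = orb (SOME u'. u' \<in> C \<and> orb u = orb u')"
      by (rule someI_ex)
    then show ?thesis unfolding f_def using eq u by metis
  qed
  have "bij_betw f (orb ` C) (fst Q)"
    unfolding bij_betw_def
  proof
    show "inj_on f (orb ` C)"
      by (rule inj_onI) (auto simp: fo eq)
    have "f ` orb ` C = \<Phi> ` C" unfolding image_image using fo by (intro image_cong) auto
    then show "f ` orb ` C = fst Q" using im by simp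
  qed
  moreover have "\<forall>x\<in>orb ` C. \<forall>y\<in>orb ` C. ole x y \<longleftrightarrow> snd Q (f x) (f y)"
    using ord fo by auto
  ultimately show ?thesis unfolding poset_iso_def orbit_poset_eq by auto
qed

lemma lift:
  "finite S \<Longrightarrow> S \<noteq> {} \<Longrightarrow> S \<subseteq> orb ` C \<Longrightarrow> \<forall>O1\<in>S. \<forall>O2\<in>S. ole O1 O2 \<or> ole O2 O1 \<Longrightarrow>
   \<exists>A. finite A \<and> A \<noteq> {} \<and> is_chain C le A \<and> orb ` A = S"
proof (induction "card S" arbitrary: S rule: less_induct)
  case less
  have tr: "\<forall>x\<in>orb ` C. \<forall>y\<in>orb ` C. \<forall>z\<in>orb ` C. ole x y \<longrightarrow> ole y z \<longrightarrow> ole x z"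
    using ole_trans by blast
  obtain M where M: "M \<in> S" "\<forall>Ob\<in>S. ole Ob M"
    using chain_max[OF less.prems(1,2), of "orb ` C" ole] less.prems tr by blast
  obtain z0 where z0: "z0 \<in> C" "M = orb z0" using M less.prems by blast
  show ?case
  proof (cases "S = {M}")
    case True
    then show ?thesis using z0 refl by (intro exI[of _ "{z0}"]) (auto simp: is_chain_def)
  next
    case False
    define S' where "S' = S - {M}"
    have S': "card S' < card S" "finite S'" "S' \<noteq> {}" "S' \<subseteq> orb ` C"
      "\<forall>O1\<in>S'. \<forall>O2\<in>S'. ole O1 O2 \<or> ole O2 O1"
      unfolding S'_def using card_Diff1_less[OF less.prems(1) M(1)] apply blast
      using less.prems(1) apply blast
      using False M(1) apply blast
      using less.prems(3,4) by blast+
    obtain A' where A': "finite A'" "A' \<noteq> {}" "is_chain C le A'" "orb ` A' = S'"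
      using less.hyps[OF S'] by blast
    have trC: "\<forall>x\<in>C. \<forall>y\<in>C. \<forall>z\<in>C. le x y \<longrightarrow> le y z \<longrightarrow> le x z" using trans by blast
    obtain a where a: "a \<in> A'" "\<forall>x\<in>A'. le x a"
      using chain_max[OF A'(1,2), of C le] A'(3) trC unfolding is_chain_def by blast
    have aC: "a \<in> C" using a A'(3) unfolding is_chain_def by auto
    have "orb a \<in> S" using a A'(4) S'_def by auto
    then have "ole (orb a) (orb z0)" using M z0 by auto
    then obtain g where g: "g \<in> carrier G" "le a (act z0 g)" using ole_orb aC z0 by blast
    define z where "z = act z0 g"
    have zC: "z \<in> C" using z0 g closed z_def by auto
    have oz: "orb z = M" using orb_act z0 g z_def by auto
    have "is_chain C le (insert z A')"
      unfolding is_chain_def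
    proof (intro conjI ballI)
      show "insert z A' \<subseteq> C" using zC A'(3) unfolding is_chain_def by auto
    next
      fix x y assume xy: "x \<in> insert z A'" "y \<in> insert z A'"
      have l: "le x z" if "x \<in> A'" for x
        using trans[of x a z] that a g A'(3) aC zC z_def unfolding is_chain_def by auto
      show "le x y \<or> le y x"
        using xy l refl[OF zC] A'(3) unfolding is_chain_def by auto
    qed
    moreover have "orb ` insert z A' = S" using oz A'(4) S'_def M by auto
    ultimately show ?thesis using A' by (intro exI[of _ "insert z A'"]) auto
  qed
qed

end

lemma (in gpos) B_lift:
  assumes B: "property_B G act C le" and A: "finite A" "A \<noteq> {}" "is_chain C le A"
    and T: "is_chain C le T" and sub: "orb ` A \<subseteq> orb ` T"
  shows "\<exists>g\<in>carrier G. (\<lambda>y. act y g) ` A \<subseteq> T"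
proof -
  obtain e where e: "bij_betw e {0..<card A} A" using ex_bij_betw_nat_finite[OF A(1)] by blast
  define n where "n = card A - 1"
  have cA: "card A > 0" using A by auto
  have rng: "{..n} = {0..<card A}" using cA n_def by auto
  have eb: "bij_betw e {..n} A" using e rng by simp
  have eA: "e i \<in> A" if "i \<le> n" for i using bij_betwE[OF eb] that by auto
  have AC: "A \<subseteq> C" and TC: "T \<subseteq> C" using A T unfolding is_chain_def by auto
  have ex: "\<exists>g. g \<in> carrier G \<and> act (e i) g \<in> T" if i: "i \<le> n" for i
  proof -
    have "orb (e i) \<in> orb ` T" using sub eA[OF i] by auto
    then obtain z where z: "z \<in> T" "orb (e i) = orb z" by auto
    then show ?thesis using orb_eq_iff[of "e i" z] eA[OF i] AC TC by blast
  qed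
  define gs where "gs i = (SOME g. g \<in> carrier G \<and> act (e i) g \<in> T)" for i
  have gs: "gs i \<in> carrier G \<and> act (e i) (gs i) \<in> T" if "i \<le> n" for i
    using someI_ex[OF ex[OF that]] unfolding gs_def by simp
  have inj: "inj_on e {..n}" and im: "e ` {..n} = A" using eb unfolding bij_betw_def by auto
  have ch2: "is_chain C le ((\<lambda>i. act (e i) (gs i)) ` {..n})"
    using T gs unfolding is_chain_def by auto
  have "inj_on e {..n} \<and> (\<forall>i\<in>{..n}. gs i \<in> carrier G) \<and>
        is_chain C le (e ` {..n}) \<and> is_chain C le ((\<lambda>i. act (e i) (gs i)) ` {..n})"
    using inj gs im A(3) ch2 by auto
  then obtain g where g: "g \<in> carrier G" "\<forall>i\<in>{..n}. act (e i) (gs i) = act (e i) g"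
    using B unfolding property_B_def by blast
  have "(\<lambda>y. act y g) ` A \<subseteq> T"
  proof
    fix w assume "w \<in> (\<lambda>y. act y g) ` A"
    then obtain i where "i \<le> n" "w = act (e i) g" using im by auto
    then show "w \<in> T" using g gs by auto
  qed
  then show ?thesis using g by blast
qed

sublocale hpos \<subseteq> S: gpos G "hf_act act" "fst (subdiv (Y, le))" "snd (subdiv (Y, le))"
  by (rule gpos.intro[OF is_group gpos_axioms.intro[OF G_poset_sub fin]])

context hpos
begin

lemma Qmem:
  assumes "fset T = Atom ` Sx"
  shows "HSet T \<in> fst (subdiv (atoms (orb ` Y, ole))) \<longleftrightarrow>
    Sx \<noteq> {} \<and> Sx \<subseteq> orb ` Y \<and> (\<forall>O1\<in>Sx. \<forall>O2\<in>Sx. ole O1 O2 \<or> ole O2 O1)"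
proof -
  have "T \<noteq> {||} \<longleftrightarrow> Sx \<noteq> {}" using assms by (metis bot_fset.rep_eq fset_inject image_is_empty)
  moreover have "Atom ` Sx \<subseteq> Atom ` orb ` Y \<longleftrightarrow> Sx \<subseteq> orb ` Y"
    by (rule inj_image_subset_iff) (simp add: inj_def)
  ultimately show ?thesis using assms unfolding subdiv_mem atoms_def by auto
qed

lemma iso_E:
  assumes B: "property_B G (hf_act act) Y le"
  shows "poset_iso (orbit_poset G (hf_act act) (subdiv (Y, le)))
                   (subdiv (atoms (orbit_poset G (hf_act act) (Y, le))))"
proof -
  have oe: "orbit_poset G (hf_act act) (Y, le) = (orb ` Y, ole)" by (rule orbit_poset_eq)
  have sp: "orbit_poset G (hf_act act) (subdiv (Y, le)) = orbit_poset G (hf_act act) (SC, sle)" by simp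
  define \<Phi> where "\<Phi> u = HSet ((\<lambda>y. Atom (orb y)) |`| (case u of HSet s \<Rightarrow> s))" for u
  have \<Phi>s: "\<Phi> (HSet s) = HSet ((\<lambda>y. Atom (orb y)) |`| s)" for s by (simp add: \<Phi>_def)
  have \<Phi>f: "fset ((\<lambda>y. Atom (orb y)) |`| s) = Atom ` orb ` fset s" for s
    by (simp add: fimage.rep_eq image_image)
  have scm: "HSet s \<in> SC \<longleftrightarrow> s \<noteq> {||} \<and> is_chain Y le (fset s)" for s
    using SC_mem unfolding is_chain_def by auto
  have inA: "inj Atom" by (simp add: inj_def)
  have orb_img: "orb ` (\<lambda>y. hf_act act y g) ` A = orb ` A" if "A \<subseteq> Y" "g \<in> carrier G" for A g
  proof -
    have "orb ` (\<lambda>y. hf_act act y g) ` A = (\<lambda>y. orb (hf_act act y g)) ` A" by (simp add: image_image)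
    also have "\<dots> = orb ` A" by (rule image_cong) (use that orb_act in auto)
    finally show ?thesis .
  qed
  show ?thesis unfolding oe sp
  proof (rule S.orbit_iso[where \<Phi> = \<Phi>])
    show "\<Phi> ` SC = fst (subdiv (atoms (orb ` Y, ole)))"
    proof
      show "\<Phi> ` SC \<subseteq> fst (subdiv (atoms (orb ` Y, ole)))"
      proof
        fix w assume "w \<in> \<Phi> ` SC"
        then obtain s where s: "HSet s \<in> SC" "w = \<Phi> (HSet s)" using subdiv_memE by blast
        have sY: "fset s \<subseteq> Y" "s \<noteq> {||}" "\<forall>x\<in>fset s. \<forall>y\<in>fset s. le x y \<or> le y x"
          using s SC_mem by auto
        have "\<forall>O1\<in>orb ` fset s. \<forall>O2\<in>orb ` fset s. ole O1 O2 \<or> ole O2 O1"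
        proof (intro ballI)
          fix O1 O2 assume "O1 \<in> orb ` fset s" "O2 \<in> orb ` fset s"
          then obtain x y where xy: "x \<in> fset s" "y \<in> fset s" "O1 = orb x" "O2 = orb y" by blast
          then have "x \<in> orb x" "y \<in> orb y" using orb_self sY(1) by auto
          then show "ole O1 O2 \<or> ole O2 O1" using sY(3) xy unfolding ole_def by blast
        qed
        moreover have "orb ` fset s \<noteq> {}" using sY(2) by auto
        ultimately show "w \<in> fst (subdiv (atoms (orb ` Y, ole)))"
          using s Qmem[OF \<Phi>f[of s]] sY(1) by (auto simp: \<Phi>s)
      qed
    next
      show "fst (subdiv (atoms (orb ` Y, ole))) \<subseteq> \<Phi> ` SC"
      proof
        fix w assume w: "w \<in> fst (subdiv (atoms (orb ` Y, ole)))"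
        then obtain T where T: "w = HSet T" using subdiv_memE by blast
        have "HSet T \<in> fst (subdiv (atoms (orb ` Y, ole)))" using w T by simp
        then have "fset T \<subseteq> Atom ` orb ` Y" unfolding subdiv_mem by (simp add: atoms_def)
        then have fT: "fset T = Atom ` (Atom -` fset T)" by auto
        have finS: "finite (Atom -` fset T)" by (rule finite_vimageI) (use inA in auto)
        have c: "Atom -` fset T \<noteq> {}" "Atom -` fset T \<subseteq> orb ` Y"
          "\<forall>O1\<in>Atom -` fset T. \<forall>O2\<in>Atom -` fset T. ole O1 O2 \<or> ole O2 O1"
          using Qmem[OF fT] w T by auto
        obtain A where A: "finite A" "A \<noteq> {}" "is_chain Y le A" "orb ` A = Atom -` fset T"
          using lift[OF finS c] by blast
        obtain s where s: "fset s = A" using fset_ex[OF A(1)] by blast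
        have "HSet s \<in> SC" using scm s A by auto
        moreover have "\<Phi> (HSet s) = w"
          using T s A(4) fT \<Phi>f[of s] by (simp add: \<Phi>s flip: fset_inject)
        ultimately show "w \<in> \<Phi> ` SC" by blast
      qed
    qed
  next
    show "\<forall>u\<in>SC. \<forall>v\<in>SC. \<Phi> u = \<Phi> v \<longleftrightarrow> S.orb u = S.orb v"
    proof (intro ballI)
      fix u v assume u: "u \<in> SC" and v: "v \<in> SC"
      then obtain s t where st: "u = HSet s" "v = HSet t" using subdiv_memE by metis
      have cs: "s \<noteq> {||}" "is_chain Y le (fset s)" and ct: "t \<noteq> {||}" "is_chain Y le (fset t)"
        using u v st scm by auto
      have sY: "fset s \<subseteq> Y" and tY: "fset t \<subseteq> Y" using cs ct unfolding is_chain_def by auto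
      have "\<Phi> u = \<Phi> v \<longleftrightarrow> orb ` fset s = orb ` fset t"
        using st \<Phi>f inj_image_eq_iff[OF inA] by (simp add: \<Phi>s flip: fset_inject)
      also have "\<dots> \<longleftrightarrow> (\<exists>g\<in>carrier G. fset t = (\<lambda>y. hf_act act y g) ` fset s)"
      proof
        assume eq: "orb ` fset s = orb ` fset t"
        obtain g where g: "g \<in> carrier G" "(\<lambda>y. hf_act act y g) ` fset s \<subseteq> fset t"
          using B_lift[OF B _ _ cs(2) ct(2)] eq cs(1) by (metis bot_fset.rep_eq finite_fset fset_inject subset_refl)
        have "fset t \<subseteq> (\<lambda>y. hf_act act y g) ` fset s"
        proof
          fix z assume z: "z \<in> fset t"
          then have "orb z \<in> orb ` fset s" using eq by auto
          then obtain y where y: "y \<in> fset s" "orb z = orb y" by auto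
          have yg: "hf_act act y g \<in> fset t" using g y by auto
          have yY: "y \<in> Y" "z \<in> Y" using y z sY tY by auto
          have "orb (hf_act act y g) = orb z" using orb_act[OF yY(1) g(1)] y by simp
          moreover have "le (hf_act act y g) z \<or> le z (hf_act act y g)"
            using ct(2) yg z unfolding is_chain_def by auto
          ultimately have "hf_act act y g = z"
            using same_orb_comp closed[OF yY(1) g(1)] yY(2) by blast
          then show "z \<in> (\<lambda>y. hf_act act y g) ` fset s" using y by blast
        qed
        then show "\<exists>g\<in>carrier G. fset t = (\<lambda>y. hf_act act y g) ` fset s" using g by blast
      next
        assume "\<exists>g\<in>carrier G. fset t = (\<lambda>y. hf_act act y g) ` fset s"
        then show "orb ` fset s = orb ` fset t" using orb_img sY by metis
      qed
      also have "\<dots> \<longleftrightarrow> (\<exists>g\<in>carrier G. v = hf_act act u g)"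
        using st by (simp add: hf_act_HSet fimage.rep_eq flip: fset_inject)
      also have "\<dots> \<longleftrightarrow> S.orb u = S.orb v" using S.orb_eq_iff u v by simp
      finally show "\<Phi> u = \<Phi> v \<longleftrightarrow> S.orb u = S.orb v" .
    qed
  next
    show "\<forall>u\<in>SC. \<forall>v\<in>SC. snd (subdiv (atoms (orb ` Y, ole))) (\<Phi> u) (\<Phi> v) \<longleftrightarrow> S.ole (S.orb u) (S.orb v)"
    proof (intro ballI)
      fix u v assume u: "u \<in> SC" and v: "v \<in> SC"
      then obtain s t where st: "u = HSet s" "v = HSet t" using subdiv_memE by metis
      have cs: "s \<noteq> {||}" "is_chain Y le (fset s)" and ct: "t \<noteq> {||}" "is_chain Y le (fset t)"
        using u v st scm by auto
      have sY: "fset s \<subseteq> Y" and tY: "fset t \<subseteq> Y" using cs ct unfolding is_chain_def by auto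
      have "snd (subdiv (atoms (orb ` Y, ole))) (\<Phi> u) (\<Phi> v) \<longleftrightarrow> orb ` fset s \<subseteq> orb ` fset t"
        using st \<Phi>f inj_image_subset_iff[OF inA] by (simp add: \<Phi>s subdiv_rel)
      also have "\<dots> \<longleftrightarrow> (\<exists>g\<in>carrier G. fset s \<subseteq> (\<lambda>y. hf_act act y g) ` fset t)"
      proof
        assume sub: "orb ` fset s \<subseteq> orb ` fset t"
        obtain g where g: "g \<in> carrier G" "(\<lambda>y. hf_act act y g) ` fset s \<subseteq> fset t"
          using B_lift[OF B _ _ cs(2) ct(2) sub] cs(1) by (metis bot_fset.rep_eq finite_fset fset_inject)
        have "fset s \<subseteq> (\<lambda>y. hf_act act y (inv g)) ` fset t"
        proof
          fix x assume x: "x \<in> fset s"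
          then have "hf_act act (hf_act act x g) (inv g) = x" using act_inv sY g by auto
          moreover have "hf_act act x g \<in> fset t" using g x by auto
          ultimately show "x \<in> (\<lambda>y. hf_act act y (inv g)) ` fset t" by (metis imageI)
        qed
        then show "\<exists>g\<in>carrier G. fset s \<subseteq> (\<lambda>y. hf_act act y g) ` fset t" using g by blast
      next
        assume "\<exists>g\<in>carrier G. fset s \<subseteq> (\<lambda>y. hf_act act y g) ` fset t"
        then obtain g where "g \<in> carrier G" "fset s \<subseteq> (\<lambda>y. hf_act act y g) ` fset t" by blast
        then show "orb ` fset s \<subseteq> orb ` fset t" using orb_img[OF tY] by (metis image_mono)
      qed
      also have "\<dots> \<longleftrightarrow> (\<exists>g\<in>carrier G. sle u (hf_act act v g))"
        using st by (simp add: hf_act_HSet subdiv_rel fimage.rep_eq)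
      also have "\<dots> \<longleftrightarrow> S.ole (S.orb u) (S.orb v)" using S.ole_orb u v by simp
      finally show "snd (subdiv (atoms (orb ` Y, ole))) (\<Phi> u) (\<Phi> v) \<longleftrightarrow> S.ole (S.orb u) (S.orb v)" .
    qed
  qed
qed

end

lemma mk_hpos: "group G \<Longrightarrow> finite (carrier G) \<Longrightarrow> G_poset G (hf_act act) Y rr \<Longrightarrow> hpos G act Y rr"
  by (simp add: hpos_def gpos_def gpos_axioms_def)

lemma mk_gpos: "group G \<Longrightarrow> finite (carrier G) \<Longrightarrow> G_poset G act Y rr \<Longrightarrow> gpos G act Y rr"
  by (simp add: gpos_def gpos_axioms_def)

lemma atoms_fst: "fst (atoms (X, r)) = Atom ` X" by (simp add: atoms_def)
lemma atoms_snd: "snd (atoms (X, r)) (Atom x) (Atom y) = r x y" by (simp add: atoms_def)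

lemma G_poset_atoms:
  assumes P: "G_poset G act X r"
  shows "G_poset G (hf_act act) (fst (atoms (X, r))) (snd (atoms (X, r)))"
proof -
  have p: "is_poset X r" "\<forall>x\<in>X. \<forall>g\<in>carrier G. act x g \<in> X" "\<forall>x\<in>X. act x \<one>\<^bsub>G\<^esub> = x"
     "\<forall>x\<in>X. \<forall>g\<in>carrier G. \<forall>h\<in>carrier G. act (act x g) h = act x (g \<otimes>\<^bsub>G\<^esub> h)"
     "\<forall>x\<in>X. \<forall>y\<in>X. \<forall>g\<in>carrier G. r x y \<longrightarrow> r (act x g) (act y g)"
    using P unfolding G_poset_def by simp_all
  have q0: "(\<forall>x\<in>X. r x x) \<and> (\<forall>x\<in>X. \<forall>y\<in>X. r x y \<and> r y x \<longrightarrow> x = y) \<and>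
     (\<forall>x\<in>X. \<forall>y\<in>X. \<forall>z\<in>X. r x y \<and> r y z \<longrightarrow> r x z)"
    using p(1) unfolding is_poset_def .
  note q = q0[THEN conjunct1] q0[THEN conjunct2, THEN conjunct1] q0[THEN conjunct2, THEN conjunct2]
  let ?R = "snd (atoms (X, r))"
  have "is_poset (Atom ` X) ?R"
    unfolding is_poset_def
  proof (intro conjI ballI impI)
    fix u assume "u \<in> Atom ` X"
    then obtain x where x: "u = Atom x" "x \<in> X" by blast
    then show "?R u u" using q(1) by (simp add: atoms_snd)
  next
    fix u v assume uv: "u \<in> Atom ` X" "v \<in> Atom ` X" "?R u v \<and> ?R v u"
    then obtain x y where xy: "u = Atom x" "v = Atom y" "x \<in> X" "y \<in> X" by blast
    then have "r x y" "r y x" using uv(3) by (simp_all add: atoms_snd)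
    then have "x = y" using q(2)[rule_format, OF xy(3,4)] by blast
    then show "u = v" using xy by simp
  next
    fix u v w assume uv: "u \<in> Atom ` X" "v \<in> Atom ` X" "w \<in> Atom ` X" "?R u v \<and> ?R v w"
    then obtain x y z where xy: "u = Atom x" "v = Atom y" "w = Atom z" "x \<in> X" "y \<in> X" "z \<in> X" by blast
    then have "r x y" "r y z" using uv(4) by (simp_all add: atoms_snd)
    then have "r x z" using q(3)[rule_format, OF xy(4,5,6)] by blast
    then show "?R u w" using xy by (simp add: atoms_snd)
  qed
  moreover have "\<forall>x\<in>Atom ` X. \<forall>g\<in>carrier G. hf_act act x g \<in> Atom ` X"
    using p(2) by (simp add: hf_act_Atom)
  moreover have "\<forall>x\<in>Atom ` X. hf_act act x \<one>\<^bsub>G\<^esub> = x"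
    using p(3) by (simp add: hf_act_Atom)
  moreover have "\<forall>x\<in>Atom ` X. \<forall>g\<in>carrier G. \<forall>h\<in>carrier G.
      hf_act act (hf_act act x g) h = hf_act act x (g \<otimes>\<^bsub>G\<^esub> h)"
    using p(4) by (simp add: hf_act_Atom)
  moreover have "\<forall>x\<in>Atom ` X. \<forall>y\<in>Atom ` X. \<forall>g\<in>carrier G. ?R x y \<longrightarrow> ?R (hf_act act x g) (hf_act act y g)"
    using p(5) by (simp add: hf_act_Atom atoms_snd)
  ultimately show ?thesis unfolding G_poset_def atoms_fst by blast
qed

lemma B_atoms:
  fixes G :: "('g, 'm) monoid_scheme" and act :: "'a \<Rightarrow> 'g \<Rightarrow> 'a"
  assumes B: "property_B G act X r"
  shows "property_B G (hf_act act) (fst (atoms (X, r))) (snd (atoms (X, r)))"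
  unfolding property_B_def
proof (intro allI impI)
  fix n :: nat and v :: "nat \<Rightarrow> 'a hf" and gs :: "nat \<Rightarrow> 'g"
  assume a: "inj_on v {..n} \<and> (\<forall>i\<in>{..n}. gs i \<in> carrier G) \<and>
        is_chain (fst (atoms (X, r))) (snd (atoms (X, r))) (v ` {..n}) \<and>
        is_chain (fst (atoms (X, r))) (snd (atoms (X, r))) ((\<lambda>i. hf_act act (v i) (gs i)) ` {..n})"
  define w where "w i = (case v i of Atom x \<Rightarrow> x)" for i
  have vw: "v i = Atom (w i)" "w i \<in> X" if "i \<le> n" for i
    using a that unfolding is_chain_def atoms_fst w_def by auto
  have "inj_on w {..n}" using a vw unfolding inj_on_def by (metis atMost_iff)
  moreover have "is_chain X r (w ` {..n})"
    using a vw unfolding is_chain_def atoms_fst by (auto simp: atoms_snd)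
  moreover have "is_chain X r ((\<lambda>i. act (w i) (gs i)) ` {..n})"
  proof -
    have "(\<lambda>i. hf_act act (v i) (gs i)) ` {..n} = Atom ` (\<lambda>i. act (w i) (gs i)) ` {..n}"
      using vw by (auto simp: hf_act_Atom image_iff)
    then show ?thesis using a unfolding is_chain_def atoms_fst
      by (auto simp: atoms_snd inj_image_subset_iff inj_def)
  qed
  ultimately obtain g where g: "g \<in> carrier G" "\<forall>i\<in>{..n}. act (w i) (gs i) = act (w i) g"
    using B a unfolding property_B_def by blast
  then show "\<exists>g\<in>carrier G. \<forall>i\<in>{..n}. hf_act act (v i) (gs i) = hf_act act (v i) g"
    using vw by (auto simp: hf_act_Atom)
qed

lemma iso_n0:
  assumes G: "group G" "finite (carrier G)" and P: "G_poset G act X r"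
  shows "poset_iso (orbit_poset G (hf_act act) (atoms (X, r))) (orbit_poset G act (X, r))"
proof -
  interpret XP: gpos G act X r using mk_gpos[OF G P] .
  interpret AP: gpos G "hf_act act" "fst (atoms (X, r))" "snd (atoms (X, r))"
    using mk_gpos[OF G G_poset_atoms[OF P]] .
  define \<Phi> where "\<Phi> u = XP.orb (case u of Atom x \<Rightarrow> x)" for u
  have oA: "AP.orb (Atom x) = Atom ` XP.orb x" for x
    by (auto simp: AP.orb_def XP.orb_def hf_act_Atom image_image)
  have eqp: "orbit_poset G (hf_act act) (atoms (X, r)) = orbit_poset G (hf_act act) (fst (atoms (X, r)), snd (atoms (X, r)))"
    by simp
  show ?thesis unfolding eqp
  proof (rule AP.orbit_iso[where \<Phi> = \<Phi>])
    show "\<Phi> ` fst (atoms (X, r)) = fst (orbit_poset G act (X, r))"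
      unfolding XP.orbit_poset_eq atoms_fst by (auto simp: \<Phi>_def image_image)
    show "\<forall>u\<in>fst (atoms (X, r)). \<forall>v\<in>fst (atoms (X, r)). \<Phi> u = \<Phi> v \<longleftrightarrow> AP.orb u = AP.orb v"
      unfolding atoms_fst by (auto simp: \<Phi>_def oA inj_image_eq_iff inj_def)
    show "\<forall>u\<in>fst (atoms (X, r)). \<forall>v\<in>fst (atoms (X, r)).
       snd (orbit_poset G act (X, r)) (\<Phi> u) (\<Phi> v) \<longleftrightarrow> AP.ole (AP.orb u) (AP.orb v)"
      unfolding atoms_fst XP.orbit_poset_eq by (auto simp: \<Phi>_def oA AP.ole_def XP.ole_def atoms_snd)
  qed
qed

theorem corollary2p10:
  fixes G :: "('g, 'm) monoid_scheme" and X :: "'a set" and r :: "'a \<Rightarrow> 'a \<Rightarrow> bool"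
    and act :: "'a \<Rightarrow> 'g \<Rightarrow> 'a"
  assumes "group G" and "finite (carrier G)" and "finite X" and "G_poset G act X r"
  shows "(\<forall>n\<ge>1. poset_iso
            (orbit_poset G (hf_act act) (subdiv_n n (atoms (X, r))))
            (subdiv_n (n - 1) (atoms (orbit_poset G (hf_act act) (subdiv (atoms (X, r)))))))
       \<and> (property_B G act X r \<longrightarrow>
          (\<forall>n. poset_iso
            (orbit_poset G (hf_act act) (subdiv_n n (atoms (X, r))))
            (subdiv_n n (atoms (orbit_poset G act (X, r))))))"
proof -
  note grp = assms(1) and fin = assms(2)
  let ?P = "\<lambda>k. subdiv_n k (atoms (X, r))"
  let ?O = "\<lambda>k. orbit_poset G (hf_act act) (?P k)"
  have gpk: "G_poset G (hf_act act) (fst (?P k)) (snd (?P k))" for k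
  proof (induction k)
    case 0 then show ?case using G_poset_atoms[OF assms(4)] by (simp add: subdiv_n_def)
  next
    case (Suc k)
    interpret H: hpos G act "fst (?P k)" "snd (?P k)" by (rule mk_hpos[OF grp fin Suc.IH])
    show ?case using H.G_poset_sub by (simp add: subdiv_n_Suc)
  qed
  have Bk: "property_B G (hf_act act) (fst (?P (Suc k))) (snd (?P (Suc k)))" for k
  proof -
    interpret H: hpos G act "fst (?P k)" "snd (?P k)" by (rule mk_hpos[OF grp fin gpk])
    show ?thesis using H.B_sub by (simp add: subdiv_n_Suc)
  qed
  have stepE: "property_B G (hf_act act) (fst (?P k)) (snd (?P k)) \<Longrightarrow>
      poset_iso (?O (Suc k)) (subdiv (atoms (?O k)))" for k
  proof -
    assume B: "property_B G (hf_act act) (fst (?P k)) (snd (?P k))"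
    interpret H: hpos G act "fst (?P k)" "snd (?P k)" by (rule mk_hpos[OF grp fin gpk])
    show ?thesis using H.iso_E[OF B] by (simp add: subdiv_n_Suc)
  qed
  have part1: "poset_iso (?O (Suc m)) (subdiv_n m (atoms (?O 1)))" for m
  proof (induction m)
    case 0 then show ?case using iso_refl_atoms by (simp add: subdiv_n_def)
  next
    case (Suc m)
    have "poset_iso (?O (Suc (Suc m))) (subdiv (atoms (?O (Suc m))))" using stepE[OF Bk] .
    moreover have "poset_iso (atoms (?O (Suc m))) (subdiv_n m (atoms (?O 1)))"
      using iso_trans[OF iso_sym[OF iso_refl_atoms] Suc.IH] .
    then have "poset_iso (subdiv (atoms (?O (Suc m)))) (subdiv_n (Suc m) (atoms (?O 1)))"
      using iso_subdiv by (simp add: subdiv_n_Suc)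
    ultimately show ?case by (rule iso_trans)
  qed
  have P1: "\<forall>n\<ge>1. poset_iso (?O n) (subdiv_n (n - 1) (atoms (?O 1)))"
  proof (intro allI impI)
    fix n :: nat assume "n \<ge> 1"
    then obtain m where "n = Suc m" by (cases n) auto
    then show "poset_iso (?O n) (subdiv_n (n - 1) (atoms (?O 1)))" using part1 by simp
  qed
  have O1: "?O 1 = orbit_poset G (hf_act act) (subdiv (atoms (X, r)))" by (simp add: subdiv_n_def)
  have P2: "\<forall>n. poset_iso (?O n) (subdiv_n n (atoms (orbit_poset G act (X, r))))"
    if B: "property_B G act X r"
  proof
    fix n
    have B0: "property_B G (hf_act act) (fst (?P 0)) (snd (?P 0))"
      using B_atoms[OF B] by (simp add: subdiv_n_def)
    have n0: "poset_iso (?O 0) (orbit_poset G act (X, r))"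
      using iso_n0[OF grp fin assms(4)] by (simp add: subdiv_n_def)
    have "poset_iso (subdiv (atoms (?O 0))) (subdiv (atoms (orbit_poset G act (X, r))))"
      by (rule iso_subdiv[OF iso_atoms[OF n0]])
    then have i1: "poset_iso (?O 1) (subdiv (atoms (orbit_poset G act (X, r))))"
      using iso_trans[OF stepE[OF B0]] by simp
    show "poset_iso (?O n) (subdiv_n n (atoms (orbit_poset G act (X, r))))"
    proof (cases n)
      case 0
      then show ?thesis using iso_trans[OF n0 iso_refl_atoms] by (simp add: subdiv_n_def)
    next
      case (Suc m)
      have "poset_iso (atoms (?O 1)) (subdiv (atoms (orbit_poset G act (X, r))))"
        using iso_trans[OF iso_sym[OF iso_refl_atoms] i1] .
      then have "poset_iso (subdiv_n m (atoms (?O 1))) (subdiv_n m (subdiv (atoms (orbit_poset G act (X, r)))))"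
        by (rule iso_subdiv_n)
      then have "poset_iso (?O (Suc m)) (subdiv_n m (subdiv (atoms (orbit_poset G act (X, r)))))"
        using iso_trans[OF part1] by blast
      then show ?thesis using Suc by (simp add: subdiv_n_Suc')
    qed
  qed
  show ?thesis using P1 P2 O1 by simp
qed

end
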